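(* Let $G$ be a necklace based on the cycle $C_n$, i.e. $G$ is obtained from $C_n$ by attaching, at each vertex $i$ of $C_n$ ($i=1,\dots,n$), a cycle $C^i$ that meets the rest of the graph only in the vertex $i$. Then $$\mathrm{vol}(G)=\mathrm{vol}(C_n)\prod_{i=1}^n\mathrm{vol}(C^i).$$
   Context: For a finite simple undirected graph $G=(V,E)$ with $V=[n]$, and $S\subseteq[n-1]$, the cut vector $x^S\in\mathbb{R}^{|E|}$ has coordinates $x^S_{ij}=1$ if $|\{i,j\}\cap S|=1$ and $x^S_{ij}=0$ otherwise, for each edge $(i,j)\in E$. The cut polytope is $\mathrm{Cut}(G)=\mathrm{conv}\{x^S: S\subseteq[n-1]\}\subset\mathbb{R}^{|E|}$, and $\mathrm{vol}(G)$ denotes the $|E|$-dimensional Lebesgue volume of $\mathrm{Cut}(G)$. *)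

theory Defs
  imports "HOL-Probability.Probability"
begin

text \<open>Graphs: a vertex set V and a set E of edges, each edge a 2-element subset of V.
  Coordinates of R^E are indexed by the edges; a point of R^E is an (extensional)
  function on E, and Lebesgue measure on R^E is the product of Lebesgue measures.\<close>

definition cut_vector :: "'v set set \<Rightarrow> 'v set \<Rightarrow> ('v set \<Rightarrow> real)" where
  "cut_vector E S = (\<lambda>e\<in>E. if card (e \<inter> S) = 1 then 1 else 0)"

definition cut_polytope :: "'v set \<Rightarrow> 'v set set \<Rightarrow> ('v set \<Rightarrow> real) set" where
  "cut_polytope V E =
     {x. \<exists>u :: 'v set \<Rightarrow> real.
           (\<forall>S\<in>Pow V. 0 \<le> u S) \<and> (\<Sum>S\<in>Pow V. u S) = 1 \<and>
           x = (\<lambda>e\<in>E. \<Sum>S\<in>Pow V. u S * cut_vector E S e)}"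

definition cut_volume :: "'v set \<Rightarrow> 'v set set \<Rightarrow> real" where
  "cut_volume V E = measure (PiM E (\<lambda>_. lborel)) (cut_polytope V E)"

definition is_cycle :: "'v set \<Rightarrow> 'v set set \<Rightarrow> bool" where
  "is_cycle W F \<longleftrightarrow> (\<exists>m f. 3 \<le> m \<and> bij_betw f {0..<m} W \<and>
       F = {{f k, f (Suc k mod m)} | k. k < m})"

end

theory Submission
  imports Defs
begin

lemma cut_polytope_image:
  "cut_polytope V E = (\<lambda>u. \<lambda>e\<in>E. \<Sum>S\<in>Pow V. u S * cut_vector E S e) `
     {u \<in> PiE (Pow V) (\<lambda>_. {0..1}). sum u (Pow V) = 1}"
proof (intro equalityI subsetI)
  fix x assume "x \<in> cut_polytope V E"
  then obtain u where u: "\<forall>S\<in>Pow V. 0 \<le> u S" "(\<Sum>S\<in>Pow V. u S) = 1"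
     "x = (\<lambda>e\<in>E. \<Sum>S\<in>Pow V. u S * cut_vector E S e)" unfolding cut_polytope_def by blast
  show "x \<in> (\<lambda>u. \<lambda>e\<in>E. \<Sum>S\<in>Pow V. u S * cut_vector E S e) `
     {u \<in> PiE (Pow V) (\<lambda>_. {0..1}). sum u (Pow V) = 1}"
  proof (cases "finite V")
    case True
    have le: "u S \<le> 1" if "S \<in> Pow V" for S
      using member_le_sum[of S "Pow V" u] u that True by auto
    show ?thesis
      apply (rule image_eqI[where x="restrict u (Pow V)"])
      using u le by (auto simp: PiE_iff)
  next
    case False
    then show ?thesis using u by simp
  qed
next
  fix x assume "x \<in> (\<lambda>u. \<lambda>e\<in>E. \<Sum>S\<in>Pow V. u S * cut_vector E S e) `
     {u \<in> PiE (Pow V) (\<lambda>_. {0..1}). sum u (Pow V) = 1}"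
  then show "x \<in> cut_polytope V E" unfolding cut_polytope_def by (auto simp: PiE_iff)
qed

lemma compact_simplex:
  "compact {u :: 'a \<Rightarrow> real. u \<in> PiE A (\<lambda>_. {0..1}) \<and> sum u A = 1}"
proof -
  have "PiE A (\<lambda>_. {0..1::real}) = PiE UNIV (\<lambda>i. if i \<in> A then {0..1} else {undefined})"
    by (auto simp: PiE_iff extensional_def split: if_splits)
  moreover have "compactin (product_topology (\<lambda>_. euclidean) UNIV)
       (PiE UNIV (\<lambda>i. if i \<in> A then {0..1::real} else {undefined}))"
    by (subst compactin_PiE) auto
  ultimately have c: "compact (PiE A (\<lambda>_. {0..1::real}))"
    by (simp add: euclidean_product_topology)
  have cl: "closed {u :: 'a \<Rightarrow> real. sum u A = 1}"
    by (intro closed_Collect_eq continuous_intros continuous_on_sum) auto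
  have "{u :: 'a \<Rightarrow> real. u \<in> PiE A (\<lambda>_. {0..1}) \<and> sum u A = 1} =
     PiE A (\<lambda>_. {0..1}) \<inter> {u. sum u A = 1}" by auto
  then show ?thesis using compact_Int_closed[OF c cl] by simp
qed

lemma cut_polytope_sets:
  assumes "finite E"
  shows "cut_polytope V E \<in> sets (PiM E (\<lambda>_. lborel))"
proof -
  obtain g :: "'a set \<Rightarrow> nat" and n where g: "g ` E = {i. i < n}" "inj_on g E"
    using finite_imp_inj_to_nat_seg[OF assms] by blast
  define h where "h = the_inv_into E g"
  have hg: "h (g e) = e" if "e \<in> E" for e
    unfolding h_def using the_inv_into_f_f[OF g(2) that] .
  have hE: "h k \<in> E" if "k \<in> g ` E" for k
    using that hg by auto
  define R :: "('a set \<Rightarrow> real) \<Rightarrow> nat \<Rightarrow> real" where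
    "R x = (\<lambda>k. if k \<in> g ` E then x (h k) else 0)" for x
  have Rm: "R \<in> measurable (PiM E (\<lambda>_. lborel)) (PiM UNIV (\<lambda>_. borel))"
    unfolding R_def
  proof (rule measurable_PiM_single')
    fix k :: nat
    show "(\<lambda>x. if k \<in> g ` E then x (h k) else 0) \<in> measurable (PiM E (\<lambda>_. lborel)) borel"
    proof (cases "k \<in> g ` E")
      case True
      then show ?thesis using hE[OF True] by simp
    next
      case False
      then show ?thesis by simp
    qed
  qed (auto simp: space_PiM)
  define D where "D = {u :: 'a set \<Rightarrow> real. u \<in> PiE (Pow V) (\<lambda>_. {0..1}) \<and> sum u (Pow V) = 1}"
  define \<psi> where "\<psi> u = (\<lambda>e\<in>E. \<Sum>S\<in>Pow V. u S * cut_vector E S e)" for u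
  have P: "cut_polytope V E = \<psi> ` D"
    unfolding \<psi>_def D_def by (rule cut_polytope_image)
  have cont: "continuous_on D (\<lambda>u. R (\<psi> u))"
  proof (rule continuous_on_coordinatewise_then_product)
    fix k
    have eq: "(\<lambda>u. R (\<psi> u) k) = (\<lambda>u. if k \<in> g ` E then (\<Sum>S\<in>Pow V. u S * cut_vector E S (h k)) else 0)"
      by (rule ext) (simp add: R_def \<psi>_def hE)
    have c1: "continuous_on D (\<lambda>u. u S)" for S
      by (rule continuous_on_subset[OF continuous_on_product_coordinates]) auto
    show "continuous_on D (\<lambda>u. R (\<psi> u) k)"
      unfolding eq
      by (cases "k \<in> g ` E") (simp_all add: continuous_on_const continuous_on_sum continuous_on_mult_right c1)
  qed
  have "compact ((\<lambda>u. R (\<psi> u)) ` D)"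
    using compact_continuous_image[OF cont] compact_simplex unfolding D_def by blast
  then have "closed ((\<lambda>u. R (\<psi> u)) ` D)" by (rule compact_imp_closed)
  then have "(\<lambda>u. R (\<psi> u)) ` D \<in> sets borel" by (rule borel_closed)
  then have "(\<lambda>u. R (\<psi> u)) ` D \<in> sets (PiM UNIV (\<lambda>_::nat. (borel :: real measure)))"
    by (simp add: sets_PiM_equal_borel)
  then have M: "R -` ((\<lambda>u. R (\<psi> u)) ` D) \<inter> space (PiM E (\<lambda>_. lborel)) \<in> sets (PiM E (\<lambda>_. lborel))"
    by (rule measurable_sets[OF Rm])
  have "R -` ((\<lambda>u. R (\<psi> u)) ` D) \<inter> space (PiM E (\<lambda>_. lborel)) = \<psi> ` D"
  proof (intro equalityI subsetI)
    fix x assume x: "x \<in> R -` ((\<lambda>u. R (\<psi> u)) ` D) \<inter> space (PiM E (\<lambda>_. lborel))"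
    then obtain u where u: "u \<in> D" "R x = R (\<psi> u)" by auto
    have "x = \<psi> u"
    proof
      fix e show "x e = \<psi> u e"
      proof (cases "e \<in> E")
        case True
        then show ?thesis using fun_cong[OF u(2), of "g e"] hg[OF True] by (auto simp: R_def)
      next
        case False
        then show ?thesis using x by (auto simp: space_PiM \<psi>_def PiE_def extensional_def)
      qed
    qed
    then show "x \<in> \<psi> ` D" using u by auto
  next
    fix x assume "x \<in> \<psi> ` D"
    then show "x \<in> R -` ((\<lambda>u. R (\<psi> u)) ` D) \<inter> space (PiM E (\<lambda>_. lborel))"
      by (auto simp: space_PiM \<psi>_def)
  qed
  then show ?thesis using M P by simp
qed


lemma measure_merge_product:
  fixes E1 E2 :: "'a set" and A B :: "('a \<Rightarrow> real) set"
  assumes disj: "E1 \<inter> E2 = {}" and fin: "finite E1" "finite E2"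
    and A: "A \<in> sets (PiM E1 (\<lambda>_. lborel))" and B: "B \<in> sets (PiM E2 (\<lambda>_. lborel))"
  shows "measure (PiM (E1 \<union> E2) (\<lambda>_. lborel))
     {x \<in> space (PiM (E1 \<union> E2) (\<lambda>_. lborel)). restrict x E1 \<in> A \<and> restrict x E2 \<in> B}
   = measure (PiM E1 (\<lambda>_. lborel)) A * measure (PiM E2 (\<lambda>_. lborel)) B"
proof -
  interpret product_sigma_finite "\<lambda>_::'a. (lborel :: real measure)"
    by (simp add: product_sigma_finite_def sigma_finite_lborel)
  interpret S1: sigma_finite_measure "PiM E1 (\<lambda>_. lborel :: real measure)"
    using sigma_finite[OF fin(1)] .
  interpret S2: sigma_finite_measure "PiM E2 (\<lambda>_. lborel :: real measure)"
    using sigma_finite[OF fin(2)] .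
  let ?M = "\<lambda>I. PiM I (\<lambda>_::'a. lborel :: real measure)"
  let ?X = "{x \<in> space (?M (E1 \<union> E2)). restrict x E1 \<in> A \<and> restrict x E2 \<in> B}"
  have r1: "(\<lambda>x. restrict x E1) \<in> measurable (?M (E1 \<union> E2)) (?M E1)"
    by (rule measurable_restrict_subset) auto
  have r2: "(\<lambda>x. restrict x E2) \<in> measurable (?M (E1 \<union> E2)) (?M E2)"
    by (rule measurable_restrict_subset) auto
  have X: "?X \<in> sets (?M (E1 \<union> E2))"
  proof -
    have "?X = ((\<lambda>x. restrict x E1) -` A \<inter> space (?M (E1 \<union> E2))) \<inter>
               ((\<lambda>x. restrict x E2) -` B \<inter> space (?M (E1 \<union> E2)))" by auto
    also have "\<dots> \<in> sets (?M (E1 \<union> E2))"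
      using measurable_sets[OF r1 A] measurable_sets[OF r2 B] by blast
    finally show ?thesis .
  qed
  have mm: "merge E1 E2 \<in> measurable (?M E1 \<Otimes>\<^sub>M ?M E2) (?M (E1 \<union> E2))"
    by (rule measurable_merge)
  have pre: "merge E1 E2 -` ?X \<inter> space (?M E1 \<Otimes>\<^sub>M ?M E2) = A \<times> B"
  proof (intro equalityI subsetI)
    fix p assume p: "p \<in> merge E1 E2 -` ?X \<inter> space (?M E1 \<Otimes>\<^sub>M ?M E2)"
    obtain y z where yz: "p = (y, z)" by (cases p)
    have ys: "y \<in> space (?M E1)" and zs: "z \<in> space (?M E2)" using p yz by (auto simp: space_pair_measure)
    have "restrict y E1 = y" using ys by (auto simp: space_PiM PiE_def extensional_restrict)
    moreover have "restrict z E2 = z" using zs by (auto simp: space_PiM PiE_def extensional_restrict)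
    ultimately show "p \<in> A \<times> B" using p yz disj by auto
  next
    fix p assume p: "p \<in> A \<times> B"
    obtain y z where yz: "p = (y, z)" by (cases p)
    have ys: "y \<in> space (?M E1)" using p yz sets.sets_into_space[OF A] by auto
    have zs: "z \<in> space (?M E2)" using p yz sets.sets_into_space[OF B] by auto
    have "restrict y E1 = y" using ys by (auto simp: space_PiM PiE_def extensional_restrict)
    moreover have "restrict z E2 = z" using zs by (auto simp: space_PiM PiE_def extensional_restrict)
    moreover have "merge E1 E2 (y, z) \<in> space (?M (E1 \<union> E2))"
      using measurable_space[OF mm, of "(y,z)"] ys zs by (auto simp: space_pair_measure)
    ultimately show "p \<in> merge E1 E2 -` ?X \<inter> space (?M E1 \<Otimes>\<^sub>M ?M E2)"
      using p yz disj ys zs by (auto simp: space_pair_measure)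
  qed
  have "measure (?M (E1 \<union> E2)) ?X = measure (distr (?M E1 \<Otimes>\<^sub>M ?M E2) (?M (E1 \<union> E2)) (merge E1 E2)) ?X"
    using distr_merge[OF disj fin] by simp
  also have "\<dots> = measure (?M E1 \<Otimes>\<^sub>M ?M E2) (merge E1 E2 -` ?X \<inter> space (?M E1 \<Otimes>\<^sub>M ?M E2))"
    by (rule measure_distr[OF mm X])
  also have "\<dots> = measure (?M E1 \<Otimes>\<^sub>M ?M E2) (A \<times> B)" using pre by simp
  also have "\<dots> = measure (?M E1) A * measure (?M E2) B"
    unfolding measure_def using S2.emeasure_pair_measure_Times[OF A B]
    by (simp add: enn2real_mult)
  finally show ?thesis .
qed


lemma cv_point:
  "e \<in> E \<Longrightarrow> e \<in> E' \<Longrightarrow> e \<subseteq> V' \<Longrightarrow> cut_vector E S e = cut_vector E' (S \<inter> V') e"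
proof -
  assume "e \<in> E" "e \<in> E'" "e \<subseteq> V'"
  then have "e \<inter> (S \<inter> V') = e \<inter> S" by auto
  then show ?thesis using \<open>e \<in> E\<close> \<open>e \<in> E'\<close> by (simp add: cut_vector_def)
qed

lemma cv_compl:
  assumes "e \<in> E" "e \<subseteq> V" "card e = 2"
  shows "cut_vector E (V - T) e = cut_vector E T e"
proof -
  have fe: "finite e" using assms(3) card.infinite by fastforce
  have "e \<inter> (V - T) = e - (e \<inter> T)" using assms(2) by auto
  then have "card (e \<inter> (V - T)) = card e - card (e \<inter> T)"
    using fe by (simp add: card_Diff_subset)
  then have "card (e \<inter> (V - T)) = 1 \<longleftrightarrow> card (e \<inter> T) = 1" using assms(3) by auto
  then show ?thesis using assms(1) by (simp add: cut_vector_def)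
qed

lemma sum_pair_split:
  "(\<Sum>p\<in>A \<times> B. f (fst p) (snd p)) = (\<Sum>x\<in>A. \<Sum>y\<in>B. f x y)"
  by (subst sum.cartesian_product) (simp add: split_def)

lemma restrict_mem:
  assumes fin: "finite V" and sub: "V' \<subseteq> V" "E' \<subseteq> E" and ed: "\<forall>e\<in>E'. e \<subseteq> V'"
    and x: "x \<in> cut_polytope V E"
  shows "restrict x E' \<in> cut_polytope V' E'"
proof -
  obtain u where u: "\<forall>S\<in>Pow V. 0 \<le> u S" "(\<Sum>S\<in>Pow V. u S) = 1"
     "x = (\<lambda>e\<in>E. \<Sum>S\<in>Pow V. u S * cut_vector E S e)" using x unfolding cut_polytope_def by blast
  define u' where "u' T = (\<Sum>S\<in>{S \<in> Pow V. S \<inter> V' = T}. u S)" for T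
  have finV': "finite V'" using fin sub finite_subset by blast
  have img: "(\<lambda>S. S \<inter> V') ` Pow V \<subseteq> Pow V'" by auto
  have grp: "(\<Sum>T\<in>Pow V'. u' T * h T) = (\<Sum>S\<in>Pow V. u S * h (S \<inter> V'))" for h
  proof -
    have "(\<Sum>T\<in>Pow V'. u' T * h T) = (\<Sum>T\<in>Pow V'. \<Sum>S\<in>{S \<in> Pow V. S \<inter> V' = T}. u S * h (S \<inter> V'))"
      unfolding u'_def sum_distrib_right by (intro sum.cong refl) auto
    also have "\<dots> = (\<Sum>S\<in>Pow V. u S * h (S \<inter> V'))"
      by (rule sum.group) (use fin finV' img in auto)
    finally show ?thesis .
  qed
  have "restrict x E' = (\<lambda>e\<in>E'. \<Sum>T\<in>Pow V'. u' T * cut_vector E' T e)"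
  proof
    fix e show "restrict x E' e = (\<lambda>e\<in>E'. \<Sum>T\<in>Pow V'. u' T * cut_vector E' T e) e"
    proof (cases "e \<in> E'")
      case True
      then have eE: "e \<in> E" using sub by auto
      have "(\<Sum>T\<in>Pow V'. u' T * cut_vector E' T e) = (\<Sum>S\<in>Pow V. u S * cut_vector E' (S \<inter> V') e)"
        by (rule grp)
      also have "\<dots> = (\<Sum>S\<in>Pow V. u S * cut_vector E S e)"
        using cv_point[OF eE True, of V'] ed True by simp
      finally show ?thesis using True eE u(3) by simp
    qed simp
  qed
  moreover have "\<forall>T\<in>Pow V'. 0 \<le> u' T" unfolding u'_def using u(1) by (auto intro: sum_nonneg)
  moreover have "(\<Sum>T\<in>Pow V'. u' T) = 1" using grp[of "\<lambda>_. 1"] u(2) by simp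
  ultimately show ?thesis unfolding cut_polytope_def by blast
qed

lemma glue_set:
  assumes fin: "finite V1" "finite V2"
    and e1: "\<forall>e\<in>E1. e \<subseteq> V1" and e2: "\<forall>e\<in>E2. e \<subseteq> V2 \<and> card e = 2"
    and w: "V1 \<inter> V2 \<subseteq> {w}"
  shows "cut_polytope (V1 \<union> V2) (E1 \<union> E2) =
    {x \<in> space (PiM (E1 \<union> E2) (\<lambda>_. lborel)).
       restrict x E1 \<in> cut_polytope V1 E1 \<and> restrict x E2 \<in> cut_polytope V2 E2}"
proof (intro equalityI subsetI)
  fix x assume x: "x \<in> cut_polytope (V1 \<union> V2) (E1 \<union> E2)"
  obtain u where "x = (\<lambda>e\<in>E1 \<union> E2. \<Sum>S\<in>Pow (V1 \<union> V2). u S * cut_vector (E1 \<union> E2) S e)"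
    using x unfolding cut_polytope_def by blast
  then have "x \<in> space (PiM (E1 \<union> E2) (\<lambda>_. lborel))"
    by (simp add: space_PiM PiE_iff)
  moreover have "restrict x E1 \<in> cut_polytope V1 E1"
    by (rule restrict_mem[OF _ _ _ e1 x]) (use fin in auto)
  moreover have "restrict x E2 \<in> cut_polytope V2 E2"
    by (rule restrict_mem[OF _ _ _ _ x]) (use fin e2 in auto)
  ultimately show "x \<in> {x \<in> space (PiM (E1 \<union> E2) (\<lambda>_. lborel)).
       restrict x E1 \<in> cut_polytope V1 E1 \<and> restrict x E2 \<in> cut_polytope V2 E2}" by blast
next
  fix x assume "x \<in> {x \<in> space (PiM (E1 \<union> E2) (\<lambda>_. lborel)).
       restrict x E1 \<in> cut_polytope V1 E1 \<and> restrict x E2 \<in> cut_polytope V2 E2}"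
  then have xs: "x \<in> space (PiM (E1 \<union> E2) (\<lambda>_. lborel))"
    and r1: "restrict x E1 \<in> cut_polytope V1 E1" and r2: "restrict x E2 \<in> cut_polytope V2 E2" by auto
  obtain a where a: "\<forall>S\<in>Pow V1. 0 \<le> a S" "(\<Sum>S\<in>Pow V1. a S) = 1"
     "restrict x E1 = (\<lambda>e\<in>E1. \<Sum>S\<in>Pow V1. a S * cut_vector E1 S e)"
    using r1 unfolding cut_polytope_def by blast
  obtain b where b: "\<forall>S\<in>Pow V2. 0 \<le> b S" "(\<Sum>S\<in>Pow V2. b S) = 1"
     "restrict x E2 = (\<lambda>e\<in>E2. \<Sum>S\<in>Pow V2. b S * cut_vector E2 S e)"
    using r2 unfolding cut_polytope_def by blast
  define \<sigma> where "\<sigma> p = fst p \<union> (if fst p \<inter> V2 = snd p \<inter> V1 then snd p else V2 - snd p)" for p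
  define P where "P = Pow V1 \<times> Pow V2"
  define u where "u S = (\<Sum>p\<in>{p \<in> P. \<sigma> p = S}. a (fst p) * b (snd p))" for S
  let ?V = "V1 \<union> V2" and ?E = "E1 \<union> E2"
  have finP: "finite P" unfolding P_def using fin by auto
  have finV: "finite (Pow ?V)" using fin by auto
  have img: "\<sigma> ` P \<subseteq> Pow ?V" unfolding \<sigma>_def P_def by (auto split: if_splits)
  have key1: "\<sigma> p \<inter> V1 = fst p" if pP: "p \<in> P" for p
  proof -
    obtain T1 T2 where p: "p = (T1, T2)" "T1 \<subseteq> V1" "T2 \<subseteq> V2" using pP unfolding P_def by (cases p) auto
    show ?thesis unfolding p \<sigma>_def using w p by (cases "T1 \<inter> V2 = T2 \<inter> V1") auto
  qed
  have key2: "\<sigma> p \<inter> V2 = (if fst p \<inter> V2 = snd p \<inter> V1 then snd p else V2 - snd p)" if pP: "p \<in> P" for p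
  proof -
    obtain T1 T2 where p: "p = (T1, T2)" "T1 \<subseteq> V1" "T2 \<subseteq> V2" using pP unfolding P_def by (cases p) auto
    show ?thesis unfolding p \<sigma>_def using w p by (cases "T1 \<inter> V2 = T2 \<inter> V1") auto
  qed
  have c1: "cut_vector ?E (\<sigma> p) e = cut_vector E1 (fst p) e" if "p \<in> P" "e \<in> E1" for p e
    using cv_point[of e ?E E1 V1 "\<sigma> p"] that e1 key1[OF that(1)] by auto
  have c2: "cut_vector ?E (\<sigma> p) e = cut_vector E2 (snd p) e" if "p \<in> P" "e \<in> E2" for p e
  proof -
    have "cut_vector ?E (\<sigma> p) e = cut_vector E2 (\<sigma> p \<inter> V2) e"
      using cv_point[of e ?E E2 V2 "\<sigma> p"] that e2 by auto
    also have "\<dots> = cut_vector E2 (snd p) e"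
      unfolding key2[OF that(1)] using cv_compl[of e E2 V2 "snd p"] that e2 by auto
    finally show ?thesis .
  qed
  have grp: "(\<Sum>S\<in>Pow ?V. u S * h S) = (\<Sum>p\<in>P. a (fst p) * b (snd p) * h (\<sigma> p))" for h
  proof -
    have "(\<Sum>S\<in>Pow ?V. u S * h S) = (\<Sum>S\<in>Pow ?V. \<Sum>p\<in>{p \<in> P. \<sigma> p = S}. a (fst p) * b (snd p) * h (\<sigma> p))"
      unfolding u_def sum_distrib_right by (intro sum.cong refl) auto
    also have "\<dots> = (\<Sum>p\<in>P. a (fst p) * b (snd p) * h (\<sigma> p))"
      by (rule sum.group[OF finP finV img])
    finally show ?thesis .
  qed
  have u0: "\<forall>S\<in>Pow ?V. 0 \<le> u S"
    unfolding u_def P_def using a(1) b(1) by (auto intro!: sum_nonneg mult_nonneg_nonneg)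
  have u1: "(\<Sum>S\<in>Pow ?V. u S) = 1"
  proof -
    have "(\<Sum>S\<in>Pow ?V. u S) = (\<Sum>p\<in>P. a (fst p) * b (snd p))" using grp[of "\<lambda>_. 1"] by simp
    also have "\<dots> = (\<Sum>T1\<in>Pow V1. \<Sum>T2\<in>Pow V2. a T1 * b T2)"
      unfolding P_def by (rule sum_pair_split)
    also have "\<dots> = (\<Sum>T1\<in>Pow V1. a T1) * (\<Sum>T2\<in>Pow V2. b T2)"
      by (simp add: sum_product)
    finally show ?thesis using a(2) b(2) by simp
  qed
  have "x = (\<lambda>e\<in>?E. \<Sum>S\<in>Pow ?V. u S * cut_vector ?E S e)"
  proof
    fix e
    show "x e = (\<lambda>e\<in>?E. \<Sum>S\<in>Pow ?V. u S * cut_vector ?E S e) e"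
    proof (cases "e \<in> E1")
      case True
      have "(\<Sum>S\<in>Pow ?V. u S * cut_vector ?E S e) = (\<Sum>p\<in>P. a (fst p) * b (snd p) * cut_vector ?E (\<sigma> p) e)"
        by (rule grp)
      also have "\<dots> = (\<Sum>p\<in>P. a (fst p) * b (snd p) * cut_vector E1 (fst p) e)"
        using c1 True by (intro sum.cong refl) auto
      also have "\<dots> = (\<Sum>T1\<in>Pow V1. \<Sum>T2\<in>Pow V2. a T1 * b T2 * cut_vector E1 T1 e)"
        unfolding P_def by (rule sum_pair_split)
      also have "\<dots> = (\<Sum>T1\<in>Pow V1. a T1 * cut_vector E1 T1 e) * (\<Sum>T2\<in>Pow V2. b T2)"
        by (simp add: sum_product sum_distrib_left sum_distrib_right mult.commute mult.left_commute)
      also have "\<dots> = x e"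
        using fun_cong[OF a(3), of e] True b(2) by simp
      finally show ?thesis using True by simp
    next
      case nE1: False
      show ?thesis
      proof (cases "e \<in> E2")
        case True
        have "(\<Sum>S\<in>Pow ?V. u S * cut_vector ?E S e) = (\<Sum>p\<in>P. a (fst p) * b (snd p) * cut_vector ?E (\<sigma> p) e)"
          by (rule grp)
        also have "\<dots> = (\<Sum>p\<in>P. a (fst p) * b (snd p) * cut_vector E2 (snd p) e)"
          using c2 True by (intro sum.cong refl) auto
        also have "\<dots> = (\<Sum>T1\<in>Pow V1. \<Sum>T2\<in>Pow V2. a T1 * b T2 * cut_vector E2 T2 e)"
          unfolding P_def by (rule sum_pair_split)
        also have "\<dots> = (\<Sum>T1\<in>Pow V1. a T1) * (\<Sum>T2\<in>Pow V2. b T2 * cut_vector E2 T2 e)"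
          by (subst sum_distrib_right) (simp add: sum_distrib_left mult.assoc)
        also have "\<dots> = x e"
          using fun_cong[OF b(3), of e] True a(2) by simp
        finally show ?thesis using True by simp
      next
        case False
        then show ?thesis using nE1 xs by (auto simp: space_PiM PiE_def extensional_def)
      qed
    qed
  qed
  then show "x \<in> cut_polytope ?V ?E" unfolding cut_polytope_def using u0 u1 by blast
qed


lemma glue_volume:
  assumes fin: "finite V1" "finite V2"
    and e1: "\<forall>e\<in>E1. e \<subseteq> V1" and e2: "\<forall>e\<in>E2. e \<subseteq> V2 \<and> card e = 2"
    and w: "V1 \<inter> V2 \<subseteq> {w}"
  shows "cut_volume (V1 \<union> V2) (E1 \<union> E2) = cut_volume V1 E1 * cut_volume V2 E2"
proof -
  have disj: "E1 \<inter> E2 = {}"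
  proof (rule ccontr)
    assume "E1 \<inter> E2 \<noteq> {}"
    then obtain e where e: "e \<in> E1" "e \<in> E2" by auto
    then have "e \<subseteq> {w}" using e1 e2 w by blast
    then have "card e \<le> 1" using card_mono[of "{w}" e] by simp
    then show False using e2 e by auto
  qed
  have fE1: "finite E1" using e1 fin(1) by (meson Pow_iff finite_Pow_iff rev_finite_subset subsetI)
  have fE2: "finite E2" using e2 fin(2) by (meson Pow_iff finite_Pow_iff rev_finite_subset subsetI)
  show ?thesis
    unfolding cut_volume_def glue_set[OF fin e1 e2 w]
    by (rule measure_merge_product[OF disj fE1 fE2 cut_polytope_sets[OF fE1] cut_polytope_sets[OF fE2]])
qed

lemma cycle_facts:
  assumes "is_cycle W F"
  shows "finite W" "\<forall>e\<in>F. e \<subseteq> W \<and> card e = 2"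
proof -
  obtain m f where m: "3 \<le> m" "bij_betw f {0..<m} W" "F = {{f k, f (Suc k mod m)} | k. k < m}"
    using assms unfolding is_cycle_def by blast
  have W: "W = f ` {0..<m}" using m(2) by (simp add: bij_betw_def)
  then show "finite W" by simp
  have inj: "inj_on f {0..<m}" using m(2) by (simp add: bij_betw_def)
  show "\<forall>e\<in>F. e \<subseteq> W \<and> card e = 2"
  proof
    fix e assume "e \<in> F"
    then obtain k where k: "k < m" "e = {f k, f (Suc k mod m)}" using m(3) by blast
    have s: "Suc k mod m < m" using k(1) by simp
    have ne: "k \<noteq> Suc k mod m"
    proof (cases "Suc k < m")
      case True then show ?thesis by simp
    next
      case False then have "Suc k = m" using k(1) by simp
      then show ?thesis using m(1) by simp
    qed
    have "f k \<noteq> f (Suc k mod m)"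
      using inj_onD[OF inj _ _ _] k(1) s ne by fastforce
    then show "e \<subseteq> W \<and> card e = 2" using k s W by auto
  qed
qed

theorem proposition7:
  fixes W0 :: "'v set" and F0 :: "'v set set"
    and W :: "'v \<Rightarrow> 'v set" and F :: "'v \<Rightarrow> 'v set set"
  assumes "is_cycle W0 F0"
    and "\<And>v. v \<in> W0 \<Longrightarrow> is_cycle (W v) (F v)"
    and "\<And>v. v \<in> W0 \<Longrightarrow> W v \<inter> W0 = {v}"
    and "\<And>v w. v \<in> W0 \<Longrightarrow> w \<in> W0 \<Longrightarrow> v \<noteq> w \<Longrightarrow> W v \<inter> W w = {}"
  shows "cut_volume (W0 \<union> (\<Union>v\<in>W0. W v)) (F0 \<union> (\<Union>v\<in>W0. F v))
           = cut_volume W0 F0 * (\<Prod>v\<in>W0. cut_volume (W v) (F v))"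
proof -
  note c0 = cycle_facts[OF assms(1)]
  note cv = cycle_facts[OF assms(2)]
  have "cut_volume (W0 \<union> (\<Union>v\<in>A. W v)) (F0 \<union> (\<Union>v\<in>A. F v))
           = cut_volume W0 F0 * (\<Prod>v\<in>A. cut_volume (W v) (F v))" if "A \<subseteq> W0" for A
  proof -
    have "finite A" using that c0(1) finite_subset by blast
    then show ?thesis using that
    proof (induction A rule: finite_subset_induct')
      case empty
      then show ?case by simp
    next
      case (insert a A)
      let ?V1 = "W0 \<union> (\<Union>v\<in>A. W v)" and ?E1 = "F0 \<union> (\<Union>v\<in>A. F v)"
      have eqV: "W0 \<union> (\<Union>v\<in>insert a A. W v) = ?V1 \<union> W a" by auto
      have eqE: "F0 \<union> (\<Union>v\<in>insert a A. F v) = ?E1 \<union> F a" by auto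
      have f1: "finite ?V1" using c0(1) cv(1) insert.hyps by auto
      have f2: "finite (W a)" using cv(1) insert.hyps by auto
      have e1: "\<forall>e\<in>?E1. e \<subseteq> ?V1" using c0(2) cv(2) insert.hyps by blast
      have e2: "\<forall>e\<in>F a. e \<subseteq> W a \<and> card e = 2" using cv(2) insert.hyps by auto
      have w: "?V1 \<inter> W a \<subseteq> {a}"
      proof
        fix x assume x: "x \<in> ?V1 \<inter> W a"
        show "x \<in> {a}"
        proof (cases "x \<in> W0")
          case True then show ?thesis using x assms(3)[of a] insert.hyps by auto
        next
          case False
          then obtain v where v: "v \<in> A" "x \<in> W v" using x by auto
          then have "v \<noteq> a" using insert.hyps by auto
          then show ?thesis using assms(4)[of v a] v x insert.hyps by auto
        qed
      qed
      have "cut_volume (W0 \<union> (\<Union>v\<in>insert a A. W v)) (F0 \<union> (\<Union>v\<in>insert a A. F v))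
          = cut_volume ?V1 ?E1 * cut_volume (W a) (F a)"
        unfolding eqV eqE by (rule glue_volume[OF f1 f2 e1 e2 w])
      also have "\<dots> = cut_volume W0 F0 * (\<Prod>v\<in>insert a A. cut_volume (W v) (F v))"
        using insert.IH insert.hyps by (simp add: prod.insert mult_ac)
      finally show ?case .
    qed
  qed
  then show ?thesis by blast
qed

end
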